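(* For every mechanism $x_i$ for agent $i$ satisfying (P) and (IC), with indirect utility $U_i(s_i)=\mathbb E[\omega x_i(s_i,s_{-i})\mid s_i]$ on $[\underline s,\overline s]$, $$\mathbb E[x_i(s)]=-\int_{\underline s}^{\overline s}\Big\{3(1-2s_i)f(s_i)+2s_i(1-s_i)f'(s_i)\Big\}U_i(s_i)\,ds_i+2\overline s(1-\overline s)f(\overline s)U_i(\overline s)-2\underline s(1-\underline s)f(\underline s)U_i(\underline s).$$
   Context: Setup. A state $\omega\in\{-1,+1\}$ is drawn with probability $1/2$ each. There are $n\ge2$ agents. Conditional on $\omega$, signals $s_1,\dots,s_n$ are i.i.d. with distribution $\mathbb F_\omega$ on $[0,1]$, normalized so that $s_i=\mathbb P[\omega=+1\mid s_i]$; $\mathbb F_{-1},\mathbb F_{+1}$ mutually absolutely continuous with densities; $\mathbb F=(\mathbb F_{-1}+\mathbb F_{+1})/2$ has density $f$ supported on the interval $[\underline s,\overline s]\subset[0,1]$, $\underline s<\overline s$, $f$ differentiable there with continuous derivative $f'$ and $|f'/f|$ bounded. The expectation $\mathbb E[x_i(s)]$ is with respect to the (unconditional) joint distribution of $s$. A mechanism for agent $i$ is measurable $x_i:[\underline s,\overline s]^n\to[0,1]$ (probability of receiving a good worth $\omega$, else $0$). (P): $\mathbb E[\omega x_i(s_i,s_{-i})\mid s_i]\ge0$; (IC): $\mathbb E[\omega x_i(s_i,s_{-i})\mid s_i]\ge\mathbb E[\omega x_i(\hat s_i,s_{-i})\mid s_i]$, for all $s_i,\hat s_i\in[\underline s,\overline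 s]$. *)

theory Defs
  imports "HOL-Analysis.Analysis"
begin

text \<open>Agents are indexed by 0..<n; a signal profile is an extensional
  function s :: nat => real on {..<n}.  fp and fm are the densities of the conditional
  signal distributions F_{+1} and F_{-1} (w.r.t. Lebesgue measure on the real line).\<close>

text \<open>Posterior P[omega = +1 | s_i = t] (prior 1/2 on each state).\<close>
definition posterior :: "(real \<Rightarrow> real) \<Rightarrow> (real \<Rightarrow> real) \<Rightarrow> real \<Rightarrow> real" where
  "posterior fp fm t = fp t / (fp t + fm t)"

text \<open>E[ x(r, s_{-i}) | omega ] where, conditional on omega, the other agents' signals
  s_j (j /= i) are i.i.d. with density g (g = fp for omega = +1, g = fm for omega = -1).\<close>
definition cond_alloc ::
  "(real \<Rightarrow> real) \<Rightarrow> nat \<Rightarrow> ((nat \<Rightarrow> real) \<Rightarrow> real) \<Rightarrow> nat \<Rightarrow> real \<Rightarrow> real" where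
  "cond_alloc g n x i r =
     (\<integral> s. x (s(i := r)) * (\<Prod>j\<in>{..<n} - {i}. g (s j))
        \<partial>(PiM ({..<n} - {i}) (\<lambda>_. lborel)))"

text \<open>E[ omega * x_i(r, s_{-i}) | s_i = t ]: interim utility of agent i with true signal t
  who reports r.\<close>
definition report_util ::
  "(real \<Rightarrow> real) \<Rightarrow> (real \<Rightarrow> real) \<Rightarrow> nat \<Rightarrow> ((nat \<Rightarrow> real) \<Rightarrow> real) \<Rightarrow> nat \<Rightarrow> real \<Rightarrow> real \<Rightarrow> real" where
  "report_util fp fm n x i t r =
     posterior fp fm t * cond_alloc fp n x i r - (1 - posterior fp fm t) * cond_alloc fm n x i r"

definition interim_util ::
  "(real \<Rightarrow> real) \<Rightarrow> (real \<Rightarrow> real) \<Rightarrow> nat \<Rightarrow> ((nat \<Rightarrow> real) \<Rightarrow> real) \<Rightarrow> nat \<Rightarrow> real \<Rightarrow> real" where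
  "interim_util fp fm n x i t = report_util fp fm n x i t t"

text \<open>E[x(s)] under the unconditional joint distribution of the signal profile:
  omega = +-1 with probability 1/2, signals i.i.d. given omega.\<close>
definition ex_ante_alloc ::
  "(real \<Rightarrow> real) \<Rightarrow> (real \<Rightarrow> real) \<Rightarrow> nat \<Rightarrow> ((nat \<Rightarrow> real) \<Rightarrow> real) \<Rightarrow> real" where
  "ex_ante_alloc fp fm n x =
     (\<integral> s. x s * ((1/2) * (\<Prod>j<n. fp (s j)) + (1/2) * (\<Prod>j<n. fm (s j)))
        \<partial>(PiM {..<n} (\<lambda>_. lborel)))"

definition mechanism :: "real \<Rightarrow> real \<Rightarrow> nat \<Rightarrow> ((nat \<Rightarrow> real) \<Rightarrow> real) \<Rightarrow> bool" where
  "mechanism a b n x \<longleftrightarrow>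
     x \<in> borel_measurable (PiM {..<n} (\<lambda>_. lborel)) \<and>
     (\<forall>s \<in> PiE {..<n} (\<lambda>_. {a..b}). 0 \<le> x s \<and> x s \<le> 1)"

end

theory Submission
  imports Defs
begin

lemma telescope_const:
  fixes F M :: "real \<Rightarrow> real"
  assumes ab: "a \<le> b" and mono: "mono_on {a..b} M" and C: "C \<ge> 0"
    and bnd: "\<And>r t. a \<le> r \<Longrightarrow> r \<le> t \<Longrightarrow> t \<le> b \<Longrightarrow> \<bar>F t - F r\<bar> \<le> (t - r) * (M t - M r) + C * (t - r)^2"
  shows "F b = F a"
proof -
  define K where "K = (b - a) * (M b - M a + C * (b - a))"
  have main: "\<bar>F b - F a\<bar> \<le> K / real N" if N: "N > 0" for N :: nat
  proof -
    define h where "h = (b - a) / real N"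
    define p where "p k = a + real k * h" for k :: nat
    have h0: "h \<ge> 0" using ab N by (simp add: h_def)
    have pN: "p N = b" using N by (simp add: p_def h_def)
    have p0: "p 0 = a" by (simp add: p_def)
    have pin: "p k \<in> {a..b}" if "k \<le> N" for k
    proof -
      have "real k * h \<le> real N * h" using that h0 by (intro mult_right_mono) auto
      also have "real N * h = b - a" using N by (simp add: h_def)
      finally show ?thesis using h0 by (auto simp: p_def)
    qed
    have step: "p (Suc k) - p k = h" for k by (simp add: p_def algebra_simps)
    have "F b - F a = (\<Sum>k<N. F (p (Suc k)) - F (p k))"
      using sum_lessThan_telescope[of "\<lambda>k. F (p k)" N] by (simp add: pN p0)
    hence "\<bar>F b - F a\<bar> \<le> (\<Sum>k<N. \<bar>F (p (Suc k)) - F (p k)\<bar>)"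
      by (simp add: sum_abs)
    also have "\<dots> \<le> (\<Sum>k<N. h * (M (p (Suc k)) - M (p k)) + C * h^2)"
    proof (rule sum_mono)
      fix k assume "k \<in> {..<N}"
      then have "Suc k \<le> N" "k \<le> N" by auto
      from pin[OF this(1)] pin[OF this(2)] show "\<bar>F (p (Suc k)) - F (p k)\<bar> \<le> h * (M (p (Suc k)) - M (p k)) + C * h^2"
        using bnd[of "p k" "p (Suc k)"] step[of k] h0 by auto
    qed
    also have "\<dots> = h * (M b - M a) + real N * C * h^2"
      using sum_lessThan_telescope[of "\<lambda>k. M (p k)" N]
      by (simp add: sum.distrib sum_distrib_left[symmetric] sum_subtractf[symmetric] pN p0)
    also have "\<dots> = K / real N"
      using N by (simp add: K_def h_def power2_eq_square field_simps)
    finally show ?thesis .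
  qed
  show ?thesis
  proof (rule ccontr)
    assume "F b \<noteq> F a"
    then have e: "\<bar>F b - F a\<bar> > 0" by simp
    obtain N :: nat where N: "K / \<bar>F b - F a\<bar> < real N" using reals_Archimedean2 by blast
    have K0: "K \<ge> 0" using main[of 1] e by simp
    have "N > 0" using N K0 e
      by (metis divide_nonneg_nonneg gr0I abs_ge_zero not_less of_nat_0)
    hence "\<bar>F b - F a\<bar> \<le> K / real N" by (rule main)
    hence "\<bar>F b - F a\<bar> * real N \<le> K" using \<open>N > 0\<close> by (simp add: field_simps)
    moreover have "K < \<bar>F b - F a\<bar> * real N" using N e by (simp add: field_simps)
    ultimately show False by simp
  qed
qed

lemma conv_facts:
  fixes U Q :: "real \<Rightarrow> real"
  assumes sub: "\<And>r t. r \<in> {a..b} \<Longrightarrow> t \<in> {a..b} \<Longrightarrow> U t - U r \<ge> (t - r) * Q r"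
  shows conv_mono: "mono_on {a..b} Q"
    and conv_sand: "\<And>r t. r \<in> {a..b} \<Longrightarrow> t \<in> {a..b} \<Longrightarrow> r \<le> t \<Longrightarrow>
             (t - r) * Q r \<le> U t - U r \<and> U t - U r \<le> (t - r) * Q t"
    and conv_bnd: "\<And>s. s \<in> {a..b} \<Longrightarrow> \<bar>Q s\<bar> \<le> max \<bar>Q a\<bar> \<bar>Q b\<bar>"
    and conv_lip: "(max \<bar>Q a\<bar> \<bar>Q b\<bar>)-lipschitz_on {a..b} U"
proof -
  show sand: "(t - r) * Q r \<le> U t - U r \<and> U t - U r \<le> (t - r) * Q t"
    if "r \<in> {a..b}" "t \<in> {a..b}" "r \<le> t" for r t
    using sub[OF that(1,2)] sub[OF that(2,1)] by (auto simp: algebra_simps)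
  show mono: "mono_on {a..b} Q"
  proof (rule mono_onI)
    fix r t assume rt: "r \<in> {a..b}" "t \<in> {a..b}" "r \<le> t"
    show "Q r \<le> Q t"
    proof (cases "r = t")
      case False
      with rt have "t - r > 0" by simp
      moreover have "(t - r) * Q r \<le> (t - r) * Q t" using sand[OF rt] by linarith
      ultimately show ?thesis by simp
    qed simp
  qed
  show bnd: "\<bar>Q s\<bar> \<le> max \<bar>Q a\<bar> \<bar>Q b\<bar>" if "s \<in> {a..b}" for s
  proof -
    have "a \<le> b" using that by simp
    have "Q a \<le> Q s" "Q s \<le> Q b" using mono_onD[OF mono] that \<open>a \<le> b\<close> by auto
    thus ?thesis by linarith
  qed
  show "(max \<bar>Q a\<bar> \<bar>Q b\<bar>)-lipschitz_on {a..b} U"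
  proof (rule lipschitz_on_leI)
    fix r t assume rt: "r \<in> {a..b}" "t \<in> {a..b}" "r \<le> t"
    have "\<bar>Q r\<bar> \<le> max \<bar>Q a\<bar> \<bar>Q b\<bar>" "\<bar>Q t\<bar> \<le> max \<bar>Q a\<bar> \<bar>Q b\<bar>" using bnd rt by auto
    moreover have "0 \<le> t - r" using rt by simp
    ultimately have "\<bar>(t - r) * Q r\<bar> \<le> (t - r) * max \<bar>Q a\<bar> \<bar>Q b\<bar>"
       "\<bar>(t - r) * Q t\<bar> \<le> (t - r) * max \<bar>Q a\<bar> \<bar>Q b\<bar>"
      by (auto simp: abs_mult intro: mult_left_mono)
    with sand[OF rt] have "\<bar>U t - U r\<bar> \<le> (t - r) * max \<bar>Q a\<bar> \<bar>Q b\<bar>"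
      unfolding abs_le_iff by linarith
    thus "dist (U r) (U t) \<le> max \<bar>Q a\<bar> \<bar>Q b\<bar> * dist r t"
      using rt by (simp add: dist_real_def abs_minus_commute mult.commute)
  qed simp
qed

lemma ibp_mono:
  fixes U Q g g' :: "real \<Rightarrow> real"
  assumes ab: "a < b"
   and sub: "\<And>r t. r \<in> {a..b} \<Longrightarrow> t \<in> {a..b} \<Longrightarrow> U t - U r \<ge> (t - r) * Q r"
   and gd: "\<And>t. t \<in> {a..b} \<Longrightarrow> (g has_real_derivative g' t) (at t within {a..b})"
   and g'c: "continuous_on {a..b} g'"
   and g0: "\<And>t. t \<in> {a..b} \<Longrightarrow> g t \<ge> 0"
   and gQ: "(\<lambda>t. g t * Q t) integrable_on {a..b}"
  shows "((\<lambda>t. g' t * U t + g t * Q t) has_integral (g b * U b - g a * U a)) {a..b}"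
proof -
  define K where "K = max \<bar>Q a\<bar> \<bar>Q b\<bar>"
  note mono = conv_mono[OF sub] and sand = conv_sand[OF sub]
  have Kb: "\<bar>Q s\<bar> \<le> K" if "s \<in> {a..b}" for s using conv_bnd[OF sub that] by (simp add: K_def)
  have K0: "K \<ge> 0" by (simp add: K_def)
  have lip: "K-lipschitz_on {a..b} U" using conv_lip[OF sub] by (simp add: K_def)
  have Uc: "continuous_on {a..b} U" by (rule lipschitz_on_continuous_on[OF lip])
  have Ulip: "\<bar>U s - U r\<bar> \<le> K * \<bar>s - r\<bar>" if "s \<in> {a..b}" "r \<in> {a..b}" for s r
    using lipschitz_onD[OF lip that] by (simp add: dist_real_def)
  have gc: "continuous_on {a..b} g"
    unfolding continuous_on_eq_continuous_within by (metis DERIV_continuous gd)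
  obtain G1 where G1: "\<And>s. s \<in> {a..b} \<Longrightarrow> \<bar>g' s\<bar> \<le> G1"
  proof -
    have "bounded (g' ` {a..b})" by (rule compact_imp_bounded[OF compact_continuous_image[OF g'c compact_Icc]])
    then obtain B where "\<forall>x\<in>{a..b}. \<bar>g' x\<bar> \<le> B" unfolding bounded_iff by auto
    thus ?thesis using that by blast
  qed
  obtain Gm where Gm: "\<And>s. s \<in> {a..b} \<Longrightarrow> \<bar>g s\<bar> \<le> Gm"
  proof -
    have "bounded (g ` {a..b})" by (rule compact_imp_bounded[OF compact_continuous_image[OF gc compact_Icc]])
    then obtain B where "\<forall>x\<in>{a..b}. \<bar>g x\<bar> \<le> B" unfolding bounded_iff by auto
    thus ?thesis using that by blast
  qed
  have G10: "G1 \<ge> 0" using G1[of a] ab by auto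
  have Gm0: "Gm \<ge> 0" using Gm[of a] ab by auto
  have Qi: "Q integrable_on {a..b}" by (rule integrable_on_mono_on[OF mono])
  have g'Uc: "continuous_on {a..b} (\<lambda>t. g' t * U t)" by (intro continuous_intros g'c Uc)
  define h where "h t = g' t * U t + g t * Q t" for t
  have hi: "h integrable_on {a..b}" unfolding h_def
    by (intro integrable_add gQ integrable_continuous_interval g'Uc)
  define D where "D t = g t * U t - integral {a..t} h" for t
  have gftc: "(g' has_integral (g t - g r)) {r..t}" if "a \<le> r" "r \<le> t" "t \<le> b" for r t
  proof (rule fundamental_theorem_of_calculus[OF that(2)])
    fix x assume "x \<in> {r..t}"
    with that have "(g has_real_derivative g' x) (at x within {a..b})" by (intro gd) auto
    hence "(g has_real_derivative g' x) (at x within {r..t})"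
      by (rule DERIV_subset) (use that in auto)
    thus "(g has_vector_derivative g' x) (at x within {r..t})"
      by (simp add: has_real_derivative_iff_has_vector_derivative)
  qed
  have glip: "\<bar>g t - g s\<bar> \<le> G1 * (t - s)" if "a \<le> s" "s \<le> t" "t \<le> b" for s t
    using has_integral_bound_real[OF G10 finite.emptyI gftc[OF that]] G1 that by auto
  have step: "\<bar>D t - D r\<bar> \<le> (t - r) * (Gm * Q t - Gm * Q r) + (2 * G1 * K) * (t - r)^2"
    if rt: "a \<le> r" "r \<le> t" "t \<le> b" for r t
  proof -
    define d where "d = t - r"
    have d0: "d \<ge> 0" using rt by (simp add: d_def)
    have sI: "{r..t} \<subseteq> {a..b}" using rt by auto
    have Qi': "Q integrable_on {r..t}" by (rule integrable_subinterval_real[OF Qi sI])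
    have gQi': "(\<lambda>s. g s * Q s) integrable_on {r..t}" by (rule integrable_subinterval_real[OF gQ sI])
    have g'Ui': "(\<lambda>s. g' s * U s) integrable_on {r..t}"
      by (rule integrable_continuous_interval[OF continuous_on_subset[OF g'Uc sI]])
    have g'i': "g' integrable_on {r..t}" using gftc[OF rt] by blast
    have Wd: "integral {a..t} h - integral {a..r} h = integral {r..t} h"
      using Henstock_Kurzweil_Integration.integral_combine[where a=a and c=r and b=t and f=h] rt integrable_subinterval_real[OF hi, of a t] by auto
    have hsplit: "integral {r..t} h = integral {r..t} (\<lambda>s. g' s * U s) + integral {r..t} (\<lambda>s. g s * Q s)"
      unfolding h_def by (rule integral_add[OF g'Ui' gQi'])
    define A where "A = g t * (U t - U r) - g t * integral {r..t} Q"
    define B where "B = integral {r..t} (\<lambda>s. g' s * (U s - U r))"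
    define C where "C = integral {r..t} (\<lambda>s. (g t - g s) * Q s)"
    have Beq: "integral {r..t} (\<lambda>s. g' s * U s) = U r * (g t - g r) + B"
    proof -
      have "integral {r..t} (\<lambda>s. g' s * (U s - U r)) = integral {r..t} (\<lambda>s. g' s * U s) - integral {r..t} (\<lambda>s. g' s * U r)"
        by (simp add: right_diff_distrib integral_diff[OF g'Ui' integrable_on_mult_left[OF g'i']])
      moreover have e: "integral {r..t} g' = g t - g r" by (rule integral_unique[OF gftc[OF rt]])
      ultimately show ?thesis by (simp add: B_def e mult.commute)
    qed
    have Ceq: "integral {r..t} (\<lambda>s. g s * Q s) = g t * integral {r..t} Q - C"
    proof -
      have "C = integral {r..t} (\<lambda>s. g t * Q s) - integral {r..t} (\<lambda>s. g s * Q s)"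
        unfolding C_def by (simp add: left_diff_distrib integral_diff[OF integrable_on_mult_right[OF Qi'] gQi'])
      moreover have "integral {r..t} (\<lambda>s. g t * Q s) = g t * integral {r..t} Q"
        using integral_mult[OF Qi', of "g t"] by simp
      ultimately show ?thesis by simp
    qed
    have Deq: "D t - D r = A - B + C"
      unfolding D_def A_def using Wd hsplit Beq Ceq by (simp add: algebra_simps)
    have intQ: "d * Q r \<le> integral {r..t} Q \<and> integral {r..t} Q \<le> d * Q t"
    proof
      have "integral {r..t} (\<lambda>s. Q r) \<le> integral {r..t} Q"
        by (rule integral_le[OF integrable_const_ivl Qi']) (use rt in \<open>auto intro!: mono_onD[OF mono]\<close>)
      thus "d * Q r \<le> integral {r..t} Q" using rt by (simp add: d_def)
      have "integral {r..t} Q \<le> integral {r..t} (\<lambda>s. Q t)"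
        by (rule integral_le[OF Qi' integrable_const_ivl]) (use rt in \<open>auto intro!: mono_onD[OF mono]\<close>)
      thus "integral {r..t} Q \<le> d * Q t" using rt by (simp add: d_def)
    qed
    have Ab: "\<bar>A\<bar> \<le> d * (Gm * Q t - Gm * Q r)"
    proof -
      have s: "(t - r) * Q r \<le> U t - U r \<and> U t - U r \<le> (t - r) * Q t" using sand rt by auto
      have "\<bar>U t - U r - integral {r..t} Q\<bar> \<le> d * (Q t - Q r)"
        using intQ s unfolding d_def right_diff_distrib abs_le_iff by linarith
      moreover have "0 \<le> g t" "g t \<le> Gm" using g0[of t] Gm[of t] rt by auto
      ultimately have "\<bar>g t * (U t - U r - integral {r..t} Q)\<bar> \<le> Gm * (d * (Q t - Q r))"
        by (auto simp: abs_mult intro!: mult_mono)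
      thus ?thesis by (simp add: A_def algebra_simps)
    qed
    have Bb: "\<bar>B\<bar> \<le> G1 * K * d * d"
    proof -
      have "(\<lambda>s. g' s * (U s - U r)) integrable_on {r..t}"
        by (simp add: right_diff_distrib integrable_diff[OF g'Ui' integrable_on_mult_left[OF g'i']])
      hence "norm B \<le> (G1 * K * d) * measure lborel {r..t}"
      proof (intro has_integral_bound_real[where S="{}"])
        show "0 \<le> G1 * K * d" using G10 K0 d0 by simp
        fix s assume s: "s \<in> {r..t} - {}"
        have "\<bar>g' s\<bar> \<le> G1" using G1 s rt by auto
        moreover have "K * (s - r) \<le> K * d" using s K0 by (auto simp: d_def intro!: mult_left_mono)
        moreover have "\<bar>U s - U r\<bar> \<le> K * (s - r)" using Ulip[of s r] s rt by auto
        ultimately have "\<bar>g' s * (U s - U r)\<bar> \<le> G1 * (K * d)"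
          unfolding abs_mult using G10 by (intro mult_mono) auto
        thus "norm (g' s * (U s - U r)) \<le> G1 * K * d" by (simp add: mult_ac)
      qed (auto simp: B_def)
      thus ?thesis using rt by (simp add: d_def)
    qed
    have Cb: "\<bar>C\<bar> \<le> G1 * K * d * d"
    proof -
      have "(\<lambda>s. (g t - g s) * Q s) integrable_on {r..t}"
        by (simp add: left_diff_distrib integrable_diff[OF integrable_on_mult_right[OF Qi'] gQi'])
      hence "norm C \<le> (G1 * K * d) * measure lborel {r..t}"
      proof (intro has_integral_bound_real[where S="{}"])
        show "0 \<le> G1 * K * d" using G10 K0 d0 by simp
        fix s assume s: "s \<in> {r..t} - {}"
        have "G1 * (t - s) \<le> G1 * d" using s G10 by (auto simp: d_def intro!: mult_left_mono)
        moreover have "\<bar>g t - g s\<bar> \<le> G1 * (t - s)" using glip[of s t] s rt by auto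
        ultimately have "\<bar>g t - g s\<bar> \<le> G1 * d" by linarith
        moreover have "\<bar>Q s\<bar> \<le> K" using Kb s rt by auto
        ultimately have "\<bar>(g t - g s) * Q s\<bar> \<le> (G1 * d) * K"
          unfolding abs_mult using G10 d0 by (intro mult_mono) auto
        thus "norm ((g t - g s) * Q s) \<le> G1 * K * d" by (simp add: mult_ac)
      qed (auto simp: C_def)
      thus ?thesis using rt by (simp add: d_def)
    qed
    have "\<bar>D t - D r\<bar> \<le> \<bar>A\<bar> + \<bar>B\<bar> + \<bar>C\<bar>" unfolding Deq by linarith
    also have "\<dots> \<le> d * (Gm * Q t - Gm * Q r) + (2 * G1 * K) * d^2"
      using Ab Bb Cb by (simp add: power2_eq_square algebra_simps)
    finally show ?thesis by (simp add: d_def)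
  qed
  have "D b = D a"
  proof (rule telescope_const[where F=D and M="\<lambda>s. Gm * Q s" and C="2 * G1 * K"])
    show "mono_on {a..b} (\<lambda>s. Gm * Q s)"
      using mono Gm0 by (auto intro!: mono_onI mult_left_mono dest: mono_onD)
  qed (use ab G10 K0 step in auto)
  hence "integral {a..b} h = g b * U b - g a * U a" by (simp add: D_def)
  thus ?thesis using hi unfolding h_def[abs_def] by (metis has_integral_integrable_integral)
qed

lemma upd_in_PiE:
  assumes y: "y \<in> space (PiM ({..<n}-{i}) (\<lambda>_. lborel :: real measure))" and i: "i < n"
    and t: "t \<in> {a..b}" and yab: "\<forall>j\<in>{..<n}-{i}. y j \<in> {a..b}"
  shows "y(i:=t) \<in> PiE {..<n} (\<lambda>_. {a..b})"
  using y i t yab by (auto simp: space_PiM PiE_iff extensional_def)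

lemma upd_meas:
  assumes i: "i < n"
  shows "(\<lambda>y. y(i:=t)) \<in> measurable (PiM ({..<n}-{i}) (\<lambda>_. lborel)) (PiM {..<n} (\<lambda>_. lborel :: real measure))"
  by (rule measurable_fun_upd[where J="{..<n}-{i}"]) (use i in auto)

lemma dens_facts:
  fixes g :: "real \<Rightarrow> real"
  assumes g_meas: "g \<in> borel_measurable lborel" and g0: "\<forall>s. 0 \<le> g s"
   and g1: "(\<integral>\<^sup>+ s. ennreal (g s) \<partial>lborel) = 1"
  shows "integrable lborel g" "integral\<^sup>L lborel g = 1"
proof -
  show "integrable lborel g"
    by (rule integrableI_nonneg) (use g_meas g0 g1 in auto)
  show "integral\<^sup>L lborel g = 1"
    using integral_eq_nn_integral[of g lborel] g_meas g0 g1 by simp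
qed

lemma prod_dens:
  fixes g :: "real \<Rightarrow> real"
  assumes g_meas: "g \<in> borel_measurable lborel" and g0: "\<forall>s. 0 \<le> g s"
   and g1: "(\<integral>\<^sup>+ s. ennreal (g s) \<partial>lborel) = 1" and J: "finite J"
  shows "integrable (PiM J (\<lambda>_. lborel)) (\<lambda>y. \<Prod>j\<in>J. g (y j))"
    "integral\<^sup>L (PiM J (\<lambda>_. lborel)) (\<lambda>y. \<Prod>j\<in>J. g (y j)) = 1"
proof -
  interpret product_sigma_finite "\<lambda>_::'a. lborel::real measure" by standard
  note d = dens_facts[OF g_meas g0 g1]
  show "integrable (PiM J (\<lambda>_. lborel)) (\<lambda>y. \<Prod>j\<in>J. g (y j))"
    using product_integrable_prod[of J "\<lambda>_. g"] J d by simp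
  show "integral\<^sup>L (PiM J (\<lambda>_. lborel)) (\<lambda>y. \<Prod>j\<in>J. g (y j)) = 1"
    using product_integral_prod[of J "\<lambda>_. g"] J d by simp
qed

lemma cond_alloc_props:
  fixes g :: "real \<Rightarrow> real"
  assumes g_meas: "g \<in> borel_measurable lborel" and g0: "\<forall>s. 0 \<le> g s"
   and g1: "(\<integral>\<^sup>+ s. ennreal (g s) \<partial>lborel) = 1"
   and gsupp: "\<forall>s. g s \<noteq> 0 \<longrightarrow> s \<in> {a..b}"
   and mech: "mechanism a b n x" and i: "i < n" and t: "t \<in> {a..b}"
  shows "integrable (PiM ({..<n}-{i}) (\<lambda>_. lborel)) (\<lambda>y. x (y(i:=t)) * (\<Prod>j\<in>{..<n}-{i}. g (y j)))"
    and "0 \<le> cond_alloc g n x i t" and "cond_alloc g n x i t \<le> 1"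
proof -
  define J where "J = {..<n} - {i}"
  have J: "finite J" by (simp add: J_def)
  note P = prod_dens[OF g_meas g0 g1 J]
  have xm: "x \<in> borel_measurable (PiM {..<n} (\<lambda>_. lborel))" using mech by (simp add: mechanism_def)
  have m: "(\<lambda>y. x (y(i:=t)) * (\<Prod>j\<in>J. g (y j))) \<in> borel_measurable (PiM J (\<lambda>_. lborel))"
    using measurable_comp[OF upd_meas[OF i, of t] xm] P(1) unfolding J_def
    by (intro borel_measurable_times) (auto simp: comp_def)
  have bnd: "0 \<le> x (y(i:=t)) * (\<Prod>j\<in>J. g (y j)) \<and> x (y(i:=t)) * (\<Prod>j\<in>J. g (y j)) \<le> (\<Prod>j\<in>J. g (y j))"
    if y: "y \<in> space (PiM J (\<lambda>_. lborel))" for y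
  proof (cases "(\<Prod>j\<in>J. g (y j)) = 0")
    case True thus ?thesis by simp
  next
    case False
    hence "\<forall>j\<in>J. g (y j) \<noteq> 0" using J by simp
    hence "\<forall>j\<in>J. y j \<in> {a..b}" using gsupp by blast
    hence "y(i:=t) \<in> PiE {..<n} (\<lambda>_. {a..b})"
      using upd_in_PiE[OF y[unfolded J_def] i t] by (simp add: J_def)
    hence "0 \<le> x (y(i:=t))" "x (y(i:=t)) \<le> 1" using mech by (auto simp: mechanism_def)
    moreover have "0 \<le> (\<Prod>j\<in>J. g (y j))" using g0 by (simp add: prod_nonneg)
    ultimately show ?thesis by (auto intro: mult_nonneg_nonneg mult_left_le_one_le[of "\<Prod>j\<in>J. g (y j)", simplified mult.commute])
  qed
  have int: "integrable (PiM J (\<lambda>_. lborel)) (\<lambda>y. x (y(i:=t)) * (\<Prod>j\<in>J. g (y j)))"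
  proof (rule Bochner_Integration.integrable_bound[OF P(1) m])
    show "AE y in PiM J (\<lambda>_. lborel). norm (x (y(i:=t)) * (\<Prod>j\<in>J. g (y j))) \<le> norm (\<Prod>j\<in>J. g (y j))"
    proof (intro AE_I2)
      fix y assume "y \<in> space (PiM J (\<lambda>_. lborel :: real measure))"
      from bnd[OF this] show "norm (x (y(i:=t)) * (\<Prod>j\<in>J. g (y j))) \<le> norm (\<Prod>j\<in>J. g (y j))"
        by simp
    qed
  qed
  thus "integrable (PiM ({..<n}-{i}) (\<lambda>_. lborel)) (\<lambda>y. x (y(i:=t)) * (\<Prod>j\<in>{..<n}-{i}. g (y j)))"
    by (simp add: J_def)
  show "0 \<le> cond_alloc g n x i t" unfolding cond_alloc_def J_def[symmetric]
    by (rule Bochner_Integration.integral_nonneg) (use bnd in auto)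
  have "cond_alloc g n x i t \<le> integral\<^sup>L (PiM J (\<lambda>_. lborel)) (\<lambda>y. \<Prod>j\<in>J. g (y j))"
    unfolding cond_alloc_def J_def[symmetric]
    by (rule Bochner_Integration.integral_mono[OF int P(1)]) (use bnd in auto)
  thus "cond_alloc g n x i t \<le> 1" using P(2) by simp
qed

lemma prod_upd_split:
  fixes g :: "real \<Rightarrow> real" and y :: "nat \<Rightarrow> real" and n i :: nat
  assumes i: "i < n"
  shows "(\<Prod>j<n. g ((y(i:=t)) j)) = g t * (\<Prod>j\<in>{..<n}-{i}. g (y j))"
proof -
  have "(\<Prod>j<n. g ((y(i:=t)) j)) = g ((y(i:=t)) i) * (\<Prod>j\<in>{..<n}-{i}. g ((y(i:=t)) j))"
    using i by (intro prod.remove) auto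
  also have "(\<Prod>j\<in>{..<n}-{i}. g ((y(i:=t)) j)) = (\<Prod>j\<in>{..<n}-{i}. g (y j))"
    by (intro prod.cong) auto
  finally show ?thesis by simp
qed

lemma ex_ante_fubini:
  fixes fp fm :: "real \<Rightarrow> real"
  assumes fp_meas: "fp \<in> borel_measurable lborel" and fm_meas: "fm \<in> borel_measurable lborel"
    and fp_nonneg: "\<forall>s. 0 \<le> fp s" and fm_nonneg: "\<forall>s. 0 \<le> fm s"
    and fp_prob: "(\<integral>\<^sup>+ s. ennreal (fp s) \<partial>lborel) = 1"
    and fm_prob: "(\<integral>\<^sup>+ s. ennreal (fm s) \<partial>lborel) = 1"
    and fp_supp: "\<forall>s. fp s \<noteq> 0 \<longrightarrow> s \<in> {a..b}"
    and fm_supp: "\<forall>s. fm s \<noteq> 0 \<longrightarrow> s \<in> {a..b}"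
    and mech: "mechanism a b n x" and i: "i < n"
  shows "ex_ante_alloc fp fm n x = (LINT t:{a..b}|lborel. ((1/2) * fp t * cond_alloc fp n x i t + (1/2) * fm t * cond_alloc fm n x i t))"
    and "set_integrable lborel {a..b} (\<lambda>t. (1/2) * fp t * cond_alloc fp n x i t + (1/2) * fm t * cond_alloc fm n x i t)"
proof -
  interpret product_sigma_finite "\<lambda>_::nat. lborel::real measure" by standard
  define J where "J = {..<n} - {i}"
  have J: "finite J" "{i} \<union> J = {..<n}" "{i} \<inter> J = {}" using i by (auto simp: J_def)
  interpret PJ: finite_product_sigma_finite "\<lambda>_::nat. lborel::real measure" J by standard (simp add: J)
  define D where "D s = (1/2) * (\<Prod>j<n. fp (s j)) + (1/2) * (\<Prod>j<n. fm (s j))" for s :: "nat \<Rightarrow> real"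
  define F where "F s = x s * D s" for s
  define \<phi> where "\<phi> t = (1/2) * fp t * cond_alloc fp n x i t + (1/2) * fm t * cond_alloc fm n x i t" for t
  have xm: "x \<in> borel_measurable (PiM {..<n} (\<lambda>_. lborel))" using mech by (simp add: mechanism_def)
  note Pp = prod_dens[OF fp_meas fp_nonneg fp_prob, of "{..<n}"] and Pm = prod_dens[OF fm_meas fm_nonneg fm_prob, of "{..<n}"]
  have Dint: "integrable (PiM {..<n} (\<lambda>_. lborel)) D"
    unfolding D_def[abs_def] using Pp(1) Pm(1) by (simp add: atLeast0LessThan)
  have Dm: "D \<in> borel_measurable (PiM {..<n} (\<lambda>_. lborel))" using Dint by auto
  have Fm: "F \<in> borel_measurable (PiM {..<n} (\<lambda>_. lborel))" unfolding F_def[abs_def] using xm Dm by measurable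
  have Fbnd: "\<bar>F s\<bar> \<le> D s" if s: "s \<in> space (PiM {..<n} (\<lambda>_. lborel :: real measure))" for s
  proof (cases "D s = 0")
    case True thus ?thesis by (simp add: F_def)
  next
    case False
    have Pn: "0 \<le> (\<Prod>j<n. fp (s j))" "0 \<le> (\<Prod>j<n. fm (s j))"
      using fp_nonneg fm_nonneg by (auto intro: prod_nonneg)
    from False have "(\<Prod>j<n. fp (s j)) \<noteq> 0 \<or> (\<Prod>j<n. fm (s j)) \<noteq> 0"
      unfolding D_def by (metis add.right_neutral mult_zero_right)
    hence "\<forall>j<n. s j \<in> {a..b}"
    proof
      assume "(\<Prod>j<n. fp (s j)) \<noteq> 0"
      hence "\<forall>j<n. fp (s j) \<noteq> 0" by auto
      thus ?thesis using fp_supp by blast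
    next
      assume "(\<Prod>j<n. fm (s j)) \<noteq> 0"
      hence "\<forall>j<n. fm (s j) \<noteq> 0" by auto
      thus ?thesis using fm_supp by blast
    qed
    hence "s \<in> PiE {..<n} (\<lambda>_. {a..b})" using s by (auto simp: space_PiM PiE_iff)
    hence "0 \<le> x s" "x s \<le> 1" using mech by (auto simp: mechanism_def)
    moreover have "0 \<le> D s" using Pn by (simp add: D_def)
    ultimately show ?thesis unfolding F_def abs_mult
      by (simp add: mult_left_le_one_le)
  qed
  have Fint: "integrable (PiM ({i} \<union> J) (\<lambda>_. lborel)) F"
    unfolding J(2)
    by (rule Bochner_Integration.integrable_bound[OF Dint Fm]) (use Fbnd in \<open>force intro!: AE_I2\<close>)
  define G where "G t = (\<integral>y. F (y(i:=t)) \<partial>PiM J (\<lambda>_. lborel))" for t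
  have updm: "(\<lambda>p. (snd p)(i := fst p)) \<in> measurable (lborel \<Otimes>\<^sub>M PiM J (\<lambda>_. lborel)) (PiM {..<n} (\<lambda>_. lborel :: real measure))"
    by (rule measurable_fun_upd[where J=J]) (use J in auto)
  have Gm: "G \<in> borel_measurable lborel"
    unfolding G_def
    by (rule PJ.borel_measurable_lebesgue_integral)
       (use measurable_comp[OF updm Fm] in \<open>simp add: comp_def case_prod_beta'\<close>)
  have "ex_ante_alloc fp fm n x = integral\<^sup>L (PiM ({i} \<union> J) (\<lambda>_. lborel)) F"
    unfolding ex_ante_alloc_def J(2) F_def D_def by simp
  also have "\<dots> = (\<integral>z. (\<integral>y. F (merge {i} J (z, y)) \<partial>PiM J (\<lambda>_. lborel)) \<partial>PiM {i} (\<lambda>_. lborel))"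
    by (rule product_integral_fold[OF J(3) _ J(1) Fint]) simp
  also have "\<dots> = (\<integral>z. G (z i) \<partial>PiM {i} (\<lambda>_. lborel))"
  proof (rule Bochner_Integration.integral_cong[OF refl])
    fix z assume z: "z \<in> space (PiM {i} (\<lambda>_. lborel :: real measure))"
    show "(\<integral>y. F (merge {i} J (z, y)) \<partial>PiM J (\<lambda>_. lborel)) = G (z i)"
      unfolding G_def
    proof (rule Bochner_Integration.integral_cong[OF refl])
      fix y assume y: "y \<in> space (PiM J (\<lambda>_. lborel :: real measure))"
      have "merge {i} J (z, y) = y(i := z i)"
        using y J(3) by (auto simp: merge_def space_PiM PiE_def extensional_def fun_eq_iff)
      thus "F (merge {i} J (z, y)) = F (y(i := z i))" by simp
    qed
  qed
  also have "\<dots> = integral\<^sup>L lborel G"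
    by (rule product_integral_singleton[OF Gm])
  finally have ex: "ex_ante_alloc fp fm n x = integral\<^sup>L lborel G" .
  have Geq: "G t = indicator {a..b} t * \<phi> t" for t
  proof (cases "t \<in> {a..b}")
    case False
    hence "fp t = 0" "fm t = 0" using fp_supp fm_supp by auto
    hence "F (y(i:=t)) = 0" for y
      unfolding F_def D_def prod_upd_split[OF i, of fp y t] prod_upd_split[OF i, of fm y t] by simp
    thus ?thesis using False by (simp add: G_def)
  next
    case True
    note Ip = cond_alloc_props(1)[OF fp_meas fp_nonneg fp_prob fp_supp mech i True]
    note Im = cond_alloc_props(1)[OF fm_meas fm_nonneg fm_prob fm_supp mech i True]
    have "F (y(i:=t)) = (1/2) * fp t * (x (y(i:=t)) * (\<Prod>j\<in>J. fp (y j))) + (1/2) * fm t * (x (y(i:=t)) * (\<Prod>j\<in>J. fm (y j)))" for y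
      using prod_upd_split[OF i, of fp y t] prod_upd_split[OF i, of fm y t]
      by (simp add: F_def D_def J_def algebra_simps)
    hence "G t = (\<integral>y. (1/2) * fp t * (x (y(i:=t)) * (\<Prod>j\<in>J. fp (y j))) + (1/2) * fm t * (x (y(i:=t)) * (\<Prod>j\<in>J. fm (y j))) \<partial>PiM J (\<lambda>_. lborel))"
      by (simp add: G_def)
    also have "\<dots> = (1/2) * fp t * cond_alloc fp n x i t + (1/2) * fm t * cond_alloc fm n x i t"
      using Ip Im unfolding J_def by (simp add: cond_alloc_def)
    finally show ?thesis using True by (simp add: \<phi>_def)
  qed
  have Gint: "integrable lborel G"
  proof (rule Bochner_Integration.integrable_bound[OF _ Gm])
    show "integrable lborel (\<lambda>t. (1/2) * fp t + (1/2) * fm t)"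
      using dens_facts(1)[OF fp_meas fp_nonneg fp_prob] dens_facts(1)[OF fm_meas fm_nonneg fm_prob] by simp
    show "AE t in lborel. norm (G t) \<le> norm ((1/2) * fp t + (1/2) * fm t)"
    proof (intro AE_I2)
      fix t
      show "norm (G t) \<le> norm ((1/2) * fp t + (1/2) * fm t)"
      proof (cases "t \<in> {a..b}")
        case True
        note Bp = cond_alloc_props(2,3)[OF fp_meas fp_nonneg fp_prob fp_supp mech i True]
        note Bm = cond_alloc_props(2,3)[OF fm_meas fm_nonneg fm_prob fm_supp mech i True]
        have "0 \<le> fp t" "0 \<le> fm t" using fp_nonneg fm_nonneg by auto
        hence "0 \<le> fp t * cond_alloc fp n x i t" "fp t * cond_alloc fp n x i t \<le> fp t"
              "0 \<le> fm t * cond_alloc fm n x i t" "fm t * cond_alloc fm n x i t \<le> fm t"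
          using Bp Bm by (auto simp: mult_left_le)
        thus ?thesis using True by (simp add: Geq \<phi>_def)
      qed (simp add: Geq fp_nonneg fm_nonneg add_nonneg_nonneg)
    qed
  qed
  have Gfun: "G = (\<lambda>t. indicator {a..b} t *\<^sub>R \<phi> t)" using Geq by (simp add: fun_eq_iff)
  show "ex_ante_alloc fp fm n x = (LINT t:{a..b}|lborel. ((1/2) * fp t * cond_alloc fp n x i t + (1/2) * fm t * cond_alloc fm n x i t))"
    using ex unfolding Gfun set_lebesgue_integral_def \<phi>_def by simp
  show "set_integrable lborel {a..b} (\<lambda>t. (1/2) * fp t * cond_alloc fp n x i t + (1/2) * fm t * cond_alloc fm n x i t)"
    using Gint unfolding Gfun set_integrable_def \<phi>_def by simp
qed

theorem lemmaA4:
  fixes fp fm f f' :: "real \<Rightarrow> real" and a b :: real and n i :: nat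
    and x :: "(nat \<Rightarrow> real) \<Rightarrow> real"
  assumes ab: "0 \<le> a" "a < b" "b \<le> 1"
    and fp_meas: "fp \<in> borel_measurable lborel" and fm_meas: "fm \<in> borel_measurable lborel"
    and fp_nonneg: "\<forall>s. 0 \<le> fp s" and fm_nonneg: "\<forall>s. 0 \<le> fm s"
    and fp_prob: "(\<integral>\<^sup>+ s. ennreal (fp s) \<partial>lborel) = 1"
    and fm_prob: "(\<integral>\<^sup>+ s. ennreal (fm s) \<partial>lborel) = 1"
    and mutual_ac: "AE s in lborel. (fp s = 0 \<longleftrightarrow> fm s = 0)"
    and f_def: "\<forall>s. f s = (fp s + fm s) / 2"
    and f_supp: "\<forall>s. s \<notin> {a..b} \<longrightarrow> f s = 0"
    and f_pos: "\<forall>s\<in>{a..b}. f s > 0"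
    and normalized: "\<forall>s\<in>{a..b}. posterior fp fm s = s"
    and f_deriv: "\<forall>s\<in>{a..b}. (f has_real_derivative f' s) (at s within {a..b})"
    and f'_cont: "continuous_on {a..b} f'"
    and f'_f_bdd: "\<exists>B. \<forall>s\<in>{a..b}. \<bar>f' s / f s\<bar> \<le> B"
    and n: "n \<ge> 2" and i: "i < n"
    and mech: "mechanism a b n x"
    and P: "\<forall>t\<in>{a..b}. interim_util fp fm n x i t \<ge> 0"
    and IC: "\<forall>t\<in>{a..b}. \<forall>r\<in>{a..b}. interim_util fp fm n x i t \<ge> report_util fp fm n x i t r"
  shows "ex_ante_alloc fp fm n x =
           - (LINT t:{a..b}|lborel. (3 * (1 - 2 * t) * f t + 2 * t * (1 - t) * f' t)
                                    * interim_util fp fm n x i t)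
           + 2 * b * (1 - b) * f b * interim_util fp fm n x i b
           - 2 * a * (1 - a) * f a * interim_util fp fm n x i a"
  proof -
  have out: "fp s = 0 \<and> fm s = 0" if "s \<notin> {a..b}" for s
  proof -
    note h = f_supp[rule_format, OF that] f_def[rule_format, of s] fp_nonneg[rule_format, of s] fm_nonneg[rule_format, of s]
    have z: "fp s + fm s = 0" using h(1,2) by simp
    have "fp s = 0" using z h(3,4) by linarith
    moreover have "fm s = 0" using z h(3,4) by linarith
    ultimately show ?thesis ..
  qed
  have fp_supp: "\<forall>s. fp s \<noteq> 0 \<longrightarrow> s \<in> {a..b}" and fm_supp: "\<forall>s. fm s \<noteq> 0 \<longrightarrow> s \<in> {a..b}"
    using out by blast+
  have dens: "fp s = 2 * s * f s \<and> fm s = 2 * (1 - s) * f s" if s: "s \<in> {a..b}" for s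
  proof -
    have sum: "fp s + fm s = 2 * f s" using f_def[rule_format, of s] by simp
    have "fp s + fm s \<noteq> 0" using sum f_pos[rule_format, OF s] by simp
    moreover have "fp s / (fp s + fm s) = s" using normalized[rule_format, OF s] by (simp add: posterior_def)
    ultimately have "fp s = s * (fp s + fm s)" by (simp add: field_simps)
    with sum show ?thesis by (simp add: algebra_simps)
  qed
  note FB = ex_ante_fubini[OF fp_meas fm_meas fp_nonneg fm_nonneg fp_prob fm_prob fp_supp fm_supp mech i]
  define Qp where "Qp = cond_alloc fp n x i"
  define Qm where "Qm = cond_alloc fm n x i"
  define Q where "Q t = Qp t + Qm t" for t
  define U where "U = interim_util fp fm n x i"
  define \<phi> where "\<phi> t = (1/2) * fp t * cond_alloc fp n x i t + (1/2) * fm t * cond_alloc fm n x i t" for t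
  define \<psi> where "\<psi> t = 3 * (1 - 2 * t) * f t + 2 * t * (1 - t) * f' t" for t
  define g where "g t = 2 * t * (1 - t) * f t" for t
  define g' where "g' t = 2 * (1 - 2 * t) * f t + 2 * t * (1 - t) * f' t" for t
  have post: "posterior fp fm t = t" if "t \<in> {a..b}" for t using normalized that by simp
  have Ueq: "U t = t * Qp t - (1 - t) * Qm t" if "t \<in> {a..b}" for t
    using post[OF that] by (simp add: U_def interim_util_def report_util_def Qp_def Qm_def)
  have Req: "report_util fp fm n x i t r = U r + (t - r) * Q r" if "t \<in> {a..b}" "r \<in> {a..b}" for t r
    using post[OF that(1)] Ueq[OF that(2)] by (simp add: report_util_def Qp_def Qm_def Q_def algebra_simps)
  have sub: "U t - U r \<ge> (t - r) * Q r" if "r \<in> {a..b}" "t \<in> {a..b}" for r t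
  proof -
    have "U t \<ge> report_util fp fm n x i t r" using IC that unfolding U_def by blast
    thus ?thesis using Req[OF that(2,1)] by linarith
  qed
  have fc: "continuous_on {a..b} f"
    unfolding continuous_on_eq_continuous_within using f_deriv by (metis DERIV_continuous)
  have gd: "(g has_real_derivative g' t) (at t within {a..b})" if t: "t \<in> {a..b}" for t
  proof -
    have "((\<lambda>t. 2 * t * (1 - t)) has_real_derivative 2 * (1 - 2 * t)) (at t within {a..b})"
      by (rule derivative_eq_intros refl | simp add: algebra_simps)+
    from DERIV_mult[OF this f_deriv[rule_format, OF t]]
    have "((\<lambda>t. 2 * t * (1 - t) * f t) has_real_derivative
            (2 * (1 - 2 * t)) * f t + 2 * t * (1 - t) * f' t) (at t within {a..b})"
      by (simp add: algebra_simps)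
    thus ?thesis unfolding g_def[abs_def] g'_def by (simp add: algebra_simps)
  qed
  have g'c: "continuous_on {a..b} g'" unfolding g'_def[abs_def] by (intro continuous_intros fc f'_cont)
  have g0: "g t \<ge> 0" if "t \<in> {a..b}" for t
  proof -
    have "0 \<le> f t" using f_pos that by (simp add: less_imp_le)
    thus ?thesis using that ab by (auto simp: g_def intro!: mult_nonneg_nonneg)
  qed
  have Uc: "continuous_on {a..b} U"
    by (rule lipschitz_on_continuous_on[OF conv_lip[OF sub]])
  have \<phi>eq: "\<phi> t = f t * (2 * t - 1) * U t + g t * Q t" if "t \<in> {a..b}" for t
  proof -
    have "\<phi> t = (1/2) * fp t * Qp t + (1/2) * fm t * Qm t" by (simp add: \<phi>_def Qp_def Qm_def)
    also have "\<dots> = t * f t * Qp t + (1-t) * f t * Qm t" using dens[OF that] by simp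
    also have "\<dots> = f t*(2*t-1)*(t*Qp t - (1-t)*Qm t) + 2 * t * (1 - t) * f t * (Qp t + Qm t)"
      by algebra
    finally show ?thesis using Ueq[OF that] by (simp add: g_def Q_def)
  qed
  have \<phi>i: "\<phi> integrable_on {a..b}"
    using set_borel_integral_eq_integral(1)[OF FB(2)] by (simp add: \<phi>_def[abs_def])
  have contp: "continuous_on {a..b} (\<lambda>t. f t * (2 * t - 1) * U t)" by (intro continuous_intros fc Uc)
  have gQ: "(\<lambda>t. g t * Q t) integrable_on {a..b}"
    by (rule integrable_eq[OF integrable_diff[OF \<phi>i integrable_continuous_interval[OF contp]]])
       (simp add: \<phi>eq)
  have ibp: "((\<lambda>t. g' t * U t + g t * Q t) has_integral (g b * U b - g a * U a)) {a..b}"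
    by (rule ibp_mono[OF ab(2) sub gd g'c g0 gQ])
  have \<psi>c: "continuous_on {a..b} (\<lambda>t. \<psi> t * U t)" unfolding \<psi>_def[abs_def] by (intro continuous_intros fc f'_cont Uc)
  have \<psi>i: "set_integrable lborel {a..b} (\<lambda>t. \<psi> t * U t)"
    unfolding set_integrable_def by (rule borel_integrable_compact[OF compact_Icc \<psi>c])
  have \<phi>si: "set_integrable lborel {a..b} \<phi>" using FB(2) by (simp add: \<phi>_def[abs_def])
  have "(LINT t:{a..b}|lborel. \<phi> t) + (LINT t:{a..b}|lborel. \<psi> t * U t) = (LINT t:{a..b}|lborel. \<phi> t + \<psi> t * U t)"
    by (rule set_integral_add(2)[OF \<phi>si \<psi>i, symmetric])
  also have "\<dots> = integral {a..b} (\<lambda>t. \<phi> t + \<psi> t * U t)"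
    by (rule set_borel_integral_eq_integral(2)[OF set_integral_add(1)[OF \<phi>si \<psi>i]])
  also have "\<dots> = integral {a..b} (\<lambda>t. g' t * U t + g t * Q t)"
    by (rule integral_cong) (simp add: \<phi>eq \<psi>_def g'_def g_def algebra_simps)
  also have "\<dots> = g b * U b - g a * U a" by (rule integral_unique[OF ibp])
  finally have key: "(LINT t:{a..b}|lborel. \<phi> t) = - (LINT t:{a..b}|lborel. \<psi> t * U t) + g b * U b - g a * U a"
    by simp
  have e1: "ex_ante_alloc fp fm n x = (LINT t:{a..b}|lborel. \<phi> t)" unfolding \<phi>_def by (rule FB(1))
  show ?thesis
    using e1 key unfolding \<psi>_def g_def U_def by linarith
qed

end
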